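(* Fix $0<q<1$. Let $\psi$ be a measurable function on $[1,\infty)$ with $\psi\ge0$, $\psi$ not identically $0$, and $\sup_{\mu\ge1}\{\psi(\mu)/\mu\}<\infty$. Then for $G=E\#F\in\mathcal G$ and $0<\tau<T_q(G)$, $$\int\psi(\mu)\big[e^{-\tau/\mu}-e^{-T_q(G)/\mu}\big]\,dF(\mu)\le\frac1q\sup_{\mu\ge1}\{\psi(\mu)/\mu\}\cdot\frac{\tau e^{-\tau}}{1-e^{-\tau}}.$$
   Context: $E(t)=1-e^{-t}$, $\bar E=1-E$, $\bar G=1-G$. $\mathcal G=\{E\#F:F$ a probability distribution on $[1,\infty)\}$ with $(E\#F)(t)=\int E(t/\mu)\,dF(\mu)$. FDR functional $T_q(G)=\inf\{t:\bar G(t)\ge\frac1q\bar E(t)\}$. *)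

theory Defs
  imports "HOL-Probability.Probability"
begin

definition Eexp :: "real \<Rightarrow> real" where
  "Eexp t = 1 - exp (- t)"

definition mixG :: "real measure \<Rightarrow> real \<Rightarrow> real" where
  "mixG F t = (\<integral>\<mu>. Eexp (t / \<mu>) \<partial>F)"

definition dist_on_one_inf :: "real measure \<Rightarrow> bool" where
  "dist_on_one_inf F \<longleftrightarrow> prob_space F \<and> sets F = sets borel \<and> measure F {1..} = 1"

text \<open>FDR functional T_q(G) = inf{t : 1 - G(t) \<ge> (1/q)(1 - E(t))}, valued in the
  extended reals (the infimum of the empty set is +\<infinity>).\<close>
definition Tq :: "real \<Rightarrow> (real \<Rightarrow> real) \<Rightarrow> ereal" where
  "Tq q G = Inf {ereal t | t. 1 - G t \<ge> (1 / q) * (1 - Eexp t)}"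

definition exp_neg_div :: "ereal \<Rightarrow> real \<Rightarrow> real" where
  "exp_neg_div T \<mu> = (if T = \<infinity> then 0 else exp (- real_of_ereal T / \<mu>))"

end

theory Submission
  imports Defs
begin

lemma one_minus_r: fixes \<mu> \<tau> :: real assumes "1 \<le> \<mu>" "0 < \<tau>"
  shows "\<mu> * (1 - exp (-\<tau>/\<mu>)) \<le> \<tau>"
proof -
  have "1 + (-\<tau>/\<mu>) \<le> exp (-\<tau>/\<mu>)" using exp_ge_add_one_self[of "-\<tau>/\<mu>"] by simp
  hence "\<mu> * (1 - exp (-\<tau>/\<mu>)) \<le> \<mu> * (\<tau>/\<mu>)" using assms by (intro mult_left_mono) auto
  thus ?thesis using assms by simp
qed

lemma r_lt1: fixes \<mu> \<tau> :: real assumes "1 \<le> \<mu>" "0 < \<tau>" shows "exp (-\<tau>/\<mu>) < 1"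
proof -
  have "-\<tau>/\<mu> < 0" using assms by (simp add: field_simps)
  thus ?thesis by simp
qed

lemma pw_inf: fixes \<mu> \<tau> :: real assumes "1 \<le> \<mu>" "0 < \<tau>"
  shows "(\<lambda>k. exp (-\<tau>/\<mu>) ^ Suc k) sums (exp (-\<tau>/\<mu>) / (1 - exp (-\<tau>/\<mu>)))"
    and "\<mu> * exp (-\<tau>/\<mu>) \<le> \<tau> * (exp (-\<tau>/\<mu>) / (1 - exp (-\<tau>/\<mu>)))"
proof -
  let ?r = "exp (-\<tau>/\<mu>)"
  have r1: "?r < 1" using r_lt1[OF assms] by simp
  have "(\<lambda>k. ?r ^ k) sums (1 / (1 - ?r))" using r1 by (intro geometric_sums) (simp add: abs_if)
  from sums_mult[OF this, of ?r] show "(\<lambda>k. ?r ^ Suc k) sums (?r / (1 - ?r))" by simp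
  have "\<mu> * (1 - ?r) * ?r \<le> \<tau> * ?r" using one_minus_r[OF assms] by (intro mult_right_mono) auto
  thus "\<mu> * ?r \<le> \<tau> * (?r / (1 - ?r))" using r1 by (simp add: field_simps)
qed

lemma pw_fin: fixes \<mu> \<tau> T :: real assumes "1 \<le> \<mu>" "0 < \<tau>" "\<tau> < T"
  shows "summable (\<lambda>k. if real (Suc k) * \<tau> < T then exp (-\<tau>/\<mu>) ^ Suc k else 0)"
    and "\<mu> * (exp (-\<tau>/\<mu>) - exp (-T/\<mu>)) \<le> \<tau> * (\<Sum>k. if real (Suc k) * \<tau> < T then exp (-\<tau>/\<mu>) ^ Suc k else 0)"
proof -
  let ?r = "exp (-\<tau>/\<mu>)"
  define N where "N = nat (ceiling (T/\<tau>) - 1)"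
  have iff: "real (Suc k) * \<tau> < T \<longleftrightarrow> k < N" for k
  proof -
    have "real (Suc k) * \<tau> < T \<longleftrightarrow> real (Suc k) < T/\<tau>" using assms by (simp add: field_simps)
    also have "\<dots> \<longleftrightarrow> int (Suc k) < ceiling (T/\<tau>)" by (metis less_ceiling_iff of_int_of_nat_eq)
    also have "\<dots> \<longleftrightarrow> k < N" unfolding N_def by linarith
    finally show ?thesis .
  qed
  have NT: "T \<le> \<tau> + real N * \<tau>"
  proof -
    have "T/\<tau> > 1" using assms by simp
    hence "ceiling (T/\<tau>) \<ge> 1" by linarith
    hence "real N = of_int (ceiling (T/\<tau>)) - 1" unfolding N_def by simp
    hence "real N \<ge> T/\<tau> - 1" by linarith
    hence "real N * \<tau> \<ge> (T/\<tau> - 1) * \<tau>" using assms by (intro mult_right_mono) auto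
    moreover have "(T/\<tau> - 1) * \<tau> = T - \<tau>" using assms by (simp add: field_simps)
    ultimately show ?thesis by linarith
  qed
  have eqf: "(\<lambda>k. if real (Suc k) * \<tau> < T then ?r ^ Suc k else 0) = (\<lambda>k. if k < N then ?r ^ Suc k else 0)"
    using iff by auto
  have sN: "(\<lambda>k. if k < N then ?r ^ Suc k else 0) sums (\<Sum>k<N. ?r ^ Suc k)"
    using sums_If_finite_set[of "{..<N}" "\<lambda>k. ?r ^ Suc k"] by simp
  show "summable (\<lambda>k. if real (Suc k) * \<tau> < T then ?r ^ Suc k else 0)"
    using sN eqf sums_summable by metis
  have sumv: "(\<Sum>k. if real (Suc k) * \<tau> < T then ?r ^ Suc k else 0) = ?r * (1 - ?r ^ N) / (1 - ?r)"
  proof -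
    have r1: "?r \<noteq> 1" using r_lt1[OF assms(1,2)] by linarith
    have "(\<Sum>k<N. ?r ^ Suc k) = ?r * (\<Sum>k<N. ?r ^ k)" by (simp add: sum_distrib_left)
    also have "\<dots> = ?r * ((1 - ?r ^ N) / (1 - ?r))" using sum_gp_strict[of ?r N] r1 by simp
    finally show ?thesis using eqf sums_unique[OF sN] by simp
  qed
  have e1: "?r ^ N = exp (real N * (-\<tau>/\<mu>))" by (rule exp_of_nat_mult[symmetric])
  have e2: "-\<tau>/\<mu> + real N * (-\<tau>/\<mu>) = -(\<tau> + real N * \<tau>)/\<mu>"
    using assms by (simp add: field_simps)
  have "?r * ?r ^ N = exp (-(\<tau> + real N * \<tau>)/\<mu>)"
    unfolding e1 exp_add[symmetric] e2 ..
  also have "\<dots> \<le> exp (-T/\<mu>)"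
  proof -
    have "-(\<tau> + real N * \<tau>) \<le> -T" using NT by linarith
    hence "-(\<tau> + real N * \<tau>)/\<mu> \<le> -T/\<mu>" using assms by (intro divide_right_mono) auto
    thus ?thesis by simp
  qed
  finally have le1: "?r * ?r ^ N \<le> exp (-T/\<mu>)" .
  have rN: "?r ^ N \<le> 1" using assms by (simp add: power_le_one)
  have r1: "?r < 1" using r_lt1[OF assms(1,2)] by simp
  have "\<mu> * (?r - exp (-T/\<mu>)) \<le> \<mu> * (?r * (1 - ?r ^ N))"
    using le1 assms by (intro mult_left_mono) (auto simp: algebra_simps)
  also have "\<dots> \<le> \<tau> * (?r * (1 - ?r ^ N) / (1 - ?r))"
  proof -
    have "\<mu> * (1 - ?r) * (?r * (1 - ?r ^ N)) \<le> \<tau> * (?r * (1 - ?r ^ N))"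
      using one_minus_r[OF assms(1,2)] rN by (intro mult_right_mono) auto
    thus ?thesis using r1 by (simp add: pos_le_divide_eq mult_ac)
  qed
  finally show "\<mu> * (?r - exp (-T/\<mu>)) \<le> \<tau> * (\<Sum>k. if real (Suc k) * \<tau> < T then ?r ^ Suc k else 0)"
    using sumv by simp
qed
theorem lemma5p6:
  fixes q \<tau> :: real and \<psi> :: "real \<Rightarrow> real" and F :: "real measure"
  assumes q: "0 < q" "q < 1"
    and \<psi>_meas: "\<psi> \<in> borel_measurable borel"
    and \<psi>_nonneg: "\<forall>\<mu>\<ge>1. \<psi> \<mu> \<ge> 0"
    and \<psi>_nonzero: "\<exists>\<mu>\<ge>1. \<psi> \<mu> \<noteq> 0"
    and \<psi>_bdd: "bdd_above {\<psi> \<mu> / \<mu> | \<mu>. \<mu> \<ge> 1}"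
    and F: "dist_on_one_inf F"
    and \<tau>: "0 < \<tau>" "ereal \<tau> < Tq q (mixG F)"
  shows "(\<integral>\<mu>. \<psi> \<mu> * (exp (- \<tau> / \<mu>) - exp_neg_div (Tq q (mixG F)) \<mu>) \<partial>F)
           \<le> (1 / q) * Sup {\<psi> \<mu> / \<mu> | \<mu>. \<mu> \<ge> 1} * (\<tau> * exp (- \<tau>) / (1 - exp (- \<tau>)))"
proof -
  define T where "T = Tq q (mixG F)"
  have tauT: "ereal \<tau> < T" using \<tau>(2) unfolding T_def .
  define S where "S = Sup {\<psi> \<mu> / \<mu> | \<mu>. \<mu> \<ge> 1}"
  have Fp: "prob_space F" and Fs: "sets F = sets borel" and F1: "measure F {1..} = 1"
    using F unfolding dist_on_one_inf_def by auto
  interpret prob_space F by fact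
  have measF: "f \<in> borel_measurable F" if "f \<in> borel_measurable borel" for f :: "real \<Rightarrow> real"
    by (subst measurable_cong_sets[OF Fs refl]) (rule that)
  have AE1: "AE \<mu> in F. 1 \<le> \<mu>"
  proof -
    have "{1..} \<in> events" using Fs by simp
    then have "AE \<mu> in F. \<mu> \<in> {1..}" using AE_in_set_eq_1[of "{1..}"] F1 by simp
    thus ?thesis by simp
  qed
  have S0: "0 \<le> S"
  proof -
    have "\<psi> 1 / 1 \<le> S" unfolding S_def by (rule cSup_upper[OF _ \<psi>_bdd]) (intro CollectI exI[of _ 1], simp)
    thus ?thesis using \<psi>_nonneg by auto
  qed
  have Sle: "\<psi> \<mu> \<le> S * \<mu>" if "1 \<le> \<mu>" for \<mu>
  proof -
    have "\<psi> \<mu> / \<mu> \<le> S" unfolding S_def by (rule cSup_upper[OF _ \<psi>_bdd]) (use that in auto)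
    thus ?thesis using that by (simp add: divide_le_eq)
  qed
  have measexp: "(\<lambda>\<mu>. exp (- t / \<mu>)) \<in> borel_measurable F" for t
    by (rule measF) measurable
  have intexp: "integrable F (\<lambda>\<mu>. exp (- t / \<mu>))" if "0 \<le> t" for t
  proof (rule integrable_const_bound[where B=1])
    show "AE x in F. norm (exp (- t / x)) \<le> 1"
      using AE1 by eventually_elim (use that in simp)
  qed (rule measexp)
  have Gbar: "1 - mixG F t = (\<integral>\<mu>. exp (- t / \<mu>) \<partial>F)" if "0 \<le> t" for t
  proof -
    have "mixG F t = (\<integral>\<mu>. 1 - exp (- t / \<mu>) \<partial>F)" unfolding mixG_def Eexp_def by simp
    also have "\<dots> = 1 - (\<integral>\<mu>. exp (- t / \<mu>) \<partial>F)"
    proof -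
      have "(\<integral>\<mu>. 1 - exp (- t / \<mu>) \<partial>F) = (\<integral>\<mu>. 1 \<partial>F) - (\<integral>\<mu>. exp (- t / \<mu>) \<partial>F)"
        by (rule Bochner_Integration.integral_diff) (use intexp[OF that] in auto)
      thus ?thesis by (simp add: prob_space)
    qed
    finally show ?thesis by simp
  qed
  have Abound: "1 - mixG F t < (1/q) * exp (- t)" if "ereal t < T" for t
  proof (rule ccontr)
    assume "\<not> ?thesis"
    hence "(1/q) * (1 - Eexp t) \<le> 1 - mixG F t" by (simp add: Eexp_def)
    hence "T \<le> ereal t" unfolding T_def Tq_def by (intro Inf_lower) blast
    thus False using that by simp
  qed
  define g where "g \<mu> = \<psi> \<mu> * (exp (- \<tau> / \<mu>) - exp_neg_div T \<mu>)" for \<mu>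
  define c where "c k = (ereal (real (Suc k) * \<tau>) < T)" for k
  define f where "f k \<mu> = S * \<tau> * (if c k then exp (- (real (Suc k) * \<tau>) / \<mu>) else 0)" for k \<mu>
  have f_nonneg: "0 \<le> f k \<mu>" for k \<mu> using S0 \<tau> unfolding f_def by auto
  have expSuc: "exp (- (real (Suc k) * \<tau>) / \<mu>) = exp (- \<tau> / \<mu>) ^ Suc k" for k \<mu>
  proof -
    have "- (real (Suc k) * \<tau>) / \<mu> = real (Suc k) * (- \<tau> / \<mu>)" by simp
    thus ?thesis by (simp only: exp_of_nat_mult)
  qed
  have pw: "g \<mu> \<le> (\<Sum>k. f k \<mu>) \<and> summable (\<lambda>k. f k \<mu>) \<and> 0 \<le> g \<mu>" if \<mu>: "1 \<le> \<mu>" for \<mu>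
  proof (cases "T = \<infinity>")
    case True
    have fe: "f k \<mu> = S * \<tau> * exp (- \<tau> / \<mu>) ^ Suc k" for k
      unfolding f_def c_def True expSuc by simp
    have sm: "(\<lambda>k. f k \<mu>) sums (S * \<tau> * (exp (- \<tau> / \<mu>) / (1 - exp (- \<tau> / \<mu>))))"
      unfolding fe using sums_mult[OF pw_inf(1)[OF \<mu> \<tau>(1)], of "S * \<tau>"] by (simp add: mult.assoc)
    have gE: "g \<mu> = \<psi> \<mu> * exp (- \<tau> / \<mu>)" unfolding g_def exp_neg_div_def True by simp
    have "g \<mu> \<le> S * \<mu> * exp (- \<tau> / \<mu>)" unfolding gE using Sle[OF \<mu>] by (intro mult_right_mono) auto
    also have "\<dots> \<le> S * (\<tau> * (exp (- \<tau> / \<mu>) / (1 - exp (- \<tau> / \<mu>))))"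
      unfolding mult.assoc using pw_inf(2)[OF \<mu> \<tau>(1)] S0 by (rule mult_left_mono)
    finally show ?thesis using sums_unique[OF sm] sums_summable[OF sm] gE \<psi>_nonneg \<mu>
      by (simp add: mult.assoc)
  next
    case False
    then obtain T' where T': "T = ereal T'" using tauT by (cases T) auto
    have tT: "\<tau> < T'" using tauT T' by simp
    have fe: "f k \<mu> = S * \<tau> * (if real (Suc k) * \<tau> < T' then exp (- \<tau> / \<mu>) ^ Suc k else 0)" for k
      unfolding f_def c_def T' expSuc by simp
    have sm: "summable (\<lambda>k. f k \<mu>)" unfolding fe
      by (rule summable_mult[OF pw_fin(1)[OF \<mu> \<tau>(1) tT]])
    have sv: "(\<Sum>k. f k \<mu>) = S * \<tau> * (\<Sum>k. if real (Suc k) * \<tau> < T' then exp (- \<tau> / \<mu>) ^ Suc k else 0)"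
      unfolding fe by (rule suminf_mult[OF pw_fin(1)[OF \<mu> \<tau>(1) tT]])
    have gE: "g \<mu> = \<psi> \<mu> * (exp (- \<tau> / \<mu>) - exp (- T' / \<mu>))"
      unfolding g_def exp_neg_div_def T' by simp
    have D0: "0 \<le> exp (- \<tau> / \<mu>) - exp (- T' / \<mu>)"
    proof -
      have "- T' / \<mu> \<le> - \<tau> / \<mu>" using tT \<mu> by (intro divide_right_mono) auto
      thus ?thesis by simp
    qed
    have "g \<mu> \<le> S * (\<mu> * (exp (- \<tau> / \<mu>) - exp (- T' / \<mu>)))"
      unfolding gE using Sle[OF \<mu>] D0 by (simp add: mult.assoc[symmetric] mult_right_mono)
    also have "\<dots> \<le> S * (\<tau> * (\<Sum>k. if real (Suc k) * \<tau> < T' then exp (- \<tau> / \<mu>) ^ Suc k else 0))"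
      using pw_fin(2)[OF \<mu> \<tau>(1) tT] S0 by (rule mult_left_mono)
    finally show ?thesis using sm sv gE D0 \<psi>_nonneg \<mu> by (simp add: mult.assoc)
  qed
  have measg: "g \<in> borel_measurable F"
  proof (cases "T = \<infinity>")
    case True
    show ?thesis unfolding g_def exp_neg_div_def True
      by (rule measF) (use \<psi>_meas in measurable)
  next
    case False
    show ?thesis unfolding g_def exp_neg_div_def using False
      by (intro measF) (use \<psi>_meas in measurable)
  qed
  have measf: "(\<lambda>\<mu>. f k \<mu>) \<in> borel_measurable F" for k
    unfolding f_def by (rule measF) measurable
  have intf: "(\<integral>\<mu>. f k \<mu> \<partial>F) \<le> S * \<tau> / q * exp (- \<tau>) ^ Suc k" for k
  proof (cases "c k")
    case True
    have t0: "0 \<le> real (Suc k) * \<tau>" using \<tau> by simp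
    have "(\<integral>\<mu>. f k \<mu> \<partial>F) = S * \<tau> * (1 - mixG F (real (Suc k) * \<tau>))"
      unfolding f_def using True Gbar[OF t0] by simp
    also have "\<dots> \<le> S * \<tau> * ((1/q) * exp (- (real (Suc k) * \<tau>)))"
      using Abound[of "real (Suc k) * \<tau>"] True S0 \<tau> unfolding c_def
      by (intro mult_left_mono) auto
    also have "exp (- (real (Suc k) * \<tau>)) = exp (- \<tau>) ^ Suc k"
      by (metis exp_of_nat_mult mult_minus_right)
    finally show ?thesis by simp
  next
    case False
    thus ?thesis unfolding f_def using S0 \<tau> q by simp
  qed
  let ?e = "exp (- \<tau>)"
  have e1: "?e < 1" using \<tau> by simp
  have gsum: "(\<lambda>k. S * \<tau> / q * ?e ^ Suc k) sums (S * \<tau> / q * (?e / (1 - ?e)))"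
  proof -
    have "(\<lambda>k. ?e ^ k) sums (1 / (1 - ?e))" using e1 by (intro geometric_sums) simp
    from sums_mult[OF this, of "S * \<tau> / q * ?e"] show ?thesis by (simp add: mult.assoc)
  qed
  have "(\<integral>\<^sup>+\<mu>. ennreal (g \<mu>) \<partial>F) \<le> (\<integral>\<^sup>+\<mu>. (\<Sum>k. ennreal (f k \<mu>)) \<partial>F)"
  proof (rule nn_integral_mono_AE)
    show "AE \<mu> in F. ennreal (g \<mu>) \<le> (\<Sum>k. ennreal (f k \<mu>))"
      using AE1
    proof eventually_elim
      case (elim \<mu>)
      then show ?case using pw[OF elim] by (simp add: suminf_ennreal2 f_nonneg)
    qed
  qed
  also have "\<dots> = (\<Sum>k. \<integral>\<^sup>+\<mu>. ennreal (f k \<mu>) \<partial>F)"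
    by (rule nn_integral_suminf) (use measf in measurable)
  also have "\<dots> = (\<Sum>k. ennreal (\<integral>\<mu>. f k \<mu> \<partial>F))"
  proof -
    have "(\<integral>\<^sup>+\<mu>. ennreal (f k \<mu>) \<partial>F) = ennreal (\<integral>\<mu>. f k \<mu> \<partial>F)" for k
    proof (rule nn_integral_eq_integral)
      show "integrable F (f k)"
      proof (rule integrable_const_bound[where B="S * \<tau>"])
        show "AE x in F. norm (f k x) \<le> S * \<tau>"
          using AE1
        proof eventually_elim
          case (elim x)
          have "- (real (Suc k) * \<tau>) / x \<le> 0" using elim \<tau> by (simp add: divide_nonpos_pos)
          hence "exp (- (real (Suc k) * \<tau>) / x) \<le> 1" by simp
          hence "S * \<tau> * exp (- (real (Suc k) * \<tau>) / x) \<le> S * \<tau> * 1"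
            using S0 \<tau> by (intro mult_left_mono) auto
          thus ?case using S0 \<tau> unfolding f_def by auto
        qed
      qed (use measf in simp)
    qed (use f_nonneg in simp)
    thus ?thesis by simp
  qed
  also have "\<dots> \<le> (\<Sum>k. ennreal (S * \<tau> / q * ?e ^ Suc k))"
    by (intro suminf_le summableI ennreal_leI intf)
  also have "\<dots> = ennreal (S * \<tau> / q * (?e / (1 - ?e)))"
  proof -
    have "(\<Sum>k. ennreal (S * \<tau> / q * ?e ^ Suc k)) = ennreal (\<Sum>k. S * \<tau> / q * ?e ^ Suc k)"
      using S0 \<tau> q by (intro suminf_ennreal2 sums_summable[OF gsum]) auto
    also have "(\<Sum>k. S * \<tau> / q * ?e ^ Suc k) = S * \<tau> / q * (?e / (1 - ?e))"
      using sums_unique[OF gsum] by simp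
    finally show ?thesis .
  qed
  finally have nnle: "(\<integral>\<^sup>+\<mu>. ennreal (g \<mu>) \<partial>F) \<le> ennreal (S * \<tau> / q * (?e / (1 - ?e)))" .
  have "(\<integral>\<mu>. g \<mu> \<partial>F) = enn2real (\<integral>\<^sup>+\<mu>. ennreal (g \<mu>) \<partial>F)"
    by (rule integral_eq_nn_integral[OF measg]) (use AE1 pw in auto)
  also have "\<dots> \<le> enn2real (ennreal (S * \<tau> / q * (?e / (1 - ?e))))"
    by (rule enn2real_mono[OF nnle]) simp
  also have "\<dots> = S * \<tau> / q * (?e / (1 - ?e))"
    using S0 \<tau> q e1 by (intro enn2real_ennreal) auto
  finally show ?thesis unfolding g_def T_def S_def by (simp add: field_simps)
qed

end
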